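(* Let $G=(V,E)$ be a connected, locally finite graph, with arc set $A=\{(u,v):\{u,v\}\in E\}$. Let $m_V:V\to(0,\infty)$, $m_A:A\to(0,\infty)$ and $w:A\to\mathbb{C}$ be functions. Define $d$, $d^*$, $S$ and $U=S(2d^*d-1_A)$ as in the context. Suppose that one of the following two settings holds: (Setting 1) $\sum_{e\in A:\,o(e)=u}|w(e)|^2=1$ for all $u\in V$, and $m_V(u)=1$, $m_A(e)=1$ for all $u\in V$, $e\in A$; (Setting 2) $\sum_{e\in A:\,o(e)=u}w(e)=1$ for all $u\in V$, and $m_A(e)=m_V(o(e))\,w(e)=m_V(t(e))\,w(\bar e)$ for all $e\in A$. Then $U$ preserves the norm of $\ell^2(m_A;A)$: $\|U\psi\|_{m_A,A}=\|\psi\|_{m_A,A}$ for every $\psi\in\ell^2(m_A;A)$.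
   Context: For an arc $e=(u,v)\in A$, $o(e)=u$ is its origin, $t(e)=v$ its terminus, and $\bar e=(v,u)$ its inverse arc. $\ell^2(m_V;V)$ and $\ell^2(m_A;A)$ are the spaces of square-summable complex functions on $V$, resp. $A$, with inner products $\langle f_1,f_2\rangle_{m_V,V}=\sum_{u\in V}\overline{f_1(u)}f_2(u)m_V(u)$ and $\langle\psi_1,\psi_2\rangle_{m_A,A}=\sum_{e\in A}\overline{\psi_1(e)}\psi_2(e)m_A(e)$. The boundary operator is $(d\psi)(u)=\sum_{e\in A:\,t(e)=u}\overline{w(\bar e)}\,\psi(e)$, its adjoint (with respect to these inner products) is $(d^*f)(e)=f(t(e))\,m_V(t(e))\,w(\bar e)/m_A(e)$, the shift is $(S\psi)(e)=\psi(\bar e)$, and $1_A$ is the identity on functions on $A$. *)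

theory Defs
  imports "HOL-Analysis.Analysis"
begin

text \<open>A graph on vertex set V is given by a symmetric irreflexive edge relation E
  whose edges lie inside V. Arcs are ordered pairs (u,v) with E u v;
  o(e) = fst e, t(e) = snd e.\<close>

definition simple_graph :: "'a set \<Rightarrow> ('a \<Rightarrow> 'a \<Rightarrow> bool) \<Rightarrow> bool" where
  "simple_graph V E \<longleftrightarrow> (\<forall>u v. E u v \<longrightarrow> u \<in> V \<and> v \<in> V \<and> E v u \<and> u \<noteq> v)"

definition connected_graph :: "'a set \<Rightarrow> ('a \<Rightarrow> 'a \<Rightarrow> bool) \<Rightarrow> bool" where
  "connected_graph V E \<longleftrightarrow> V \<noteq> {} \<and> (\<forall>u\<in>V. \<forall>v\<in>V. (u, v) \<in> {(x, y). E x y}\<^sup>*)"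

definition locally_finite :: "'a set \<Rightarrow> ('a \<Rightarrow> 'a \<Rightarrow> bool) \<Rightarrow> bool" where
  "locally_finite V E \<longleftrightarrow> (\<forall>u\<in>V. finite {v. E u v})"

definition arcs :: "('a \<Rightarrow> 'a \<Rightarrow> bool) \<Rightarrow> ('a \<times> 'a) set" where
  "arcs E = {(u, v). E u v}"

definition rev_arc :: "'a \<times> 'a \<Rightarrow> 'a \<times> 'a" where
  "rev_arc e = (snd e, fst e)"

definition bd :: "('a \<Rightarrow> 'a \<Rightarrow> bool) \<Rightarrow> ('a \<times> 'a \<Rightarrow> complex) \<Rightarrow> ('a \<times> 'a \<Rightarrow> complex) \<Rightarrow> 'a \<Rightarrow> complex" where
  "bd E w \<psi> u = (\<Sum>e\<in>{e\<in>arcs E. snd e = u}. cnj (w (rev_arc e)) * \<psi> e)"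

definition bd_adj :: "('a \<Rightarrow> real) \<Rightarrow> ('a \<times> 'a \<Rightarrow> real) \<Rightarrow> ('a \<times> 'a \<Rightarrow> complex) \<Rightarrow> ('a \<Rightarrow> complex) \<Rightarrow> 'a \<times> 'a \<Rightarrow> complex" where
  "bd_adj mV mA w f e = f (snd e) * complex_of_real (mV (snd e)) * w (rev_arc e) / complex_of_real (mA e)"

definition shift :: "('a \<times> 'a \<Rightarrow> complex) \<Rightarrow> 'a \<times> 'a \<Rightarrow> complex" where
  "shift \<psi> e = \<psi> (rev_arc e)"

definition evolution :: "('a \<Rightarrow> 'a \<Rightarrow> bool) \<Rightarrow> ('a \<Rightarrow> real) \<Rightarrow> ('a \<times> 'a \<Rightarrow> real) \<Rightarrow> ('a \<times> 'a \<Rightarrow> complex) \<Rightarrow> ('a \<times> 'a \<Rightarrow> complex) \<Rightarrow> 'a \<times> 'a \<Rightarrow> complex" where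
  "evolution E mV mA w \<psi> = shift (\<lambda>e. 2 * bd_adj mV mA w (bd E w \<psi>) e - \<psi> e)"

definition in_l2 :: "('b \<Rightarrow> real) \<Rightarrow> 'b set \<Rightarrow> ('b \<Rightarrow> complex) \<Rightarrow> bool" where
  "in_l2 m X \<psi> \<longleftrightarrow> (\<lambda>e. (cmod (\<psi> e))\<^sup>2 * m e) summable_on X"

definition l2_norm :: "('b \<Rightarrow> real) \<Rightarrow> 'b set \<Rightarrow> ('b \<Rightarrow> complex) \<Rightarrow> real" where
  "l2_norm m X \<psi> = sqrt (\<Sum>\<^sub>\<infinity>e\<in>X. (cmod (\<psi> e))\<^sup>2 * m e)"

end

theory Submission imports Defs begin

lemma block_lemma:
  fixes f h :: "'b \<Rightarrow> real"
  assumes disj: "disjoint_family_on B A" and fin: "\<And>x. x\<in>A \<Longrightarrow> finite (B x)"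
   and eq: "\<And>x. x\<in>A \<Longrightarrow> sum f (B x) = sum h (B x)"
   and fnn: "\<And>x y. x\<in>A \<Longrightarrow> y \<in> B x \<Longrightarrow> f y \<ge> 0"
   and hnn: "\<And>x y. x\<in>A \<Longrightarrow> y \<in> B x \<Longrightarrow> h y \<ge> 0"
   and fs: "f summable_on (\<Union>x\<in>A. B x)"
  shows "h summable_on (\<Union>x\<in>A. B x) \<and> infsum h (\<Union>x\<in>A. B x) = infsum f (\<Union>x\<in>A. B x)"
proof -
  have U: "(\<Union>x\<in>A. B x) = snd ` Sigma A B" by force
  have inj: "inj_on snd (Sigma A B)" using disj by (force simp: disjoint_family_on_def inj_on_def)
  have gs: "(\<lambda>x. sum f (B x)) summable_on A"
    using summable_on_Union_iff[of A f B "\<lambda>x. sum f (B x)"] fs fin fnn disj by (auto intro: has_sum_finite)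
  have hs: "h summable_on (\<Union>x\<in>A. B x)"
    using summable_on_Union_iff[of A h B "\<lambda>x. sum f (B x)"] gs fin hnn disj eq by (auto intro: has_sum_finite)
  have gen: "infsum k (\<Union>x\<in>A. B x) = infsum (\<lambda>x. sum k (B x)) A"
    if ks: "k summable_on (\<Union>x\<in>A. B x)" for k :: "'b \<Rightarrow> real"
  proof -
    have ks': "(k \<circ> snd) summable_on Sigma A B" using ks U inj summable_on_reindex by metis
    have "infsum k (\<Union>x\<in>A. B x) = infsum (k \<circ> snd) (Sigma A B)" using U inj infsum_reindex by metis
    also have "\<dots> = infsum (\<lambda>x. infsum (\<lambda>y. (k \<circ> snd) (x,y)) (B x)) A"
      using infsum_Sigma_banach[OF ks'] by simp
    also have "\<dots> = infsum (\<lambda>x. sum k (B x)) A"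
      by (rule infsum_cong) (simp add: fin)
    finally show ?thesis .
  qed
  have "infsum (\<lambda>x. sum h (B x)) A = infsum (\<lambda>x. sum f (B x)) A"
    by (rule infsum_cong) (simp add: eq)
  then show ?thesis using hs gen[OF hs] gen[OF fs] by simp
qed

lemma cnorm_sq: "(complex_of_real (cmod z))\<^sup>2 = z * cnj z"
  using complex_norm_square[of z] by simp

lemma block1:
  fixes a \<psi> :: "'b \<Rightarrow> complex"
  assumes fin: "finite B" and n: "(\<Sum>e\<in>B. (cmod (a e))\<^sup>2) = 1"
    and c: "c = (\<Sum>e\<in>B. cnj (a e) * \<psi> e)"
  shows "(\<Sum>e\<in>B. (cmod (2*c*a e - \<psi> e))\<^sup>2) = (\<Sum>e\<in>B. (cmod (\<psi> e))\<^sup>2)"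
proof -
  have n': "(\<Sum>e\<in>B. a e * cnj (a e)) = 1"
    using arg_cong[OF n, of complex_of_real] by (simp add: cnorm_sq)
  have c': "(\<Sum>e\<in>B. a e * cnj (\<psi> e)) = cnj c" by (simp add: c)
  have "complex_of_real (\<Sum>e\<in>B. (cmod (2*c*a e - \<psi> e))\<^sup>2)
     = (\<Sum>e\<in>B. 4*(c*cnj c)*(a e * cnj (a e)) - 2*c*(a e * cnj (\<psi> e)) - 2*cnj c*(cnj (a e) * \<psi> e) + \<psi> e * cnj (\<psi> e))"
    by (simp add: cnorm_sq algebra_simps)
  also have "\<dots> = 4*(c*cnj c)*(\<Sum>e\<in>B. a e * cnj (a e)) - 2*c*(\<Sum>e\<in>B. a e * cnj (\<psi> e))
        - 2*cnj c*(\<Sum>e\<in>B. cnj (a e) * \<psi> e) + (\<Sum>e\<in>B. \<psi> e * cnj (\<psi> e))"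
    by (simp add: sum.distrib sum_subtractf sum_distrib_left)
  also have "\<dots> = complex_of_real (\<Sum>e\<in>B. (cmod (\<psi> e))\<^sup>2)"
    by (simp add: n' c' c[symmetric] cnorm_sq)
  finally show ?thesis using of_real_eq_iff by blast
qed

lemma block2:
  fixes \<psi> :: "'b \<Rightarrow> complex" and m :: "'b \<Rightarrow> real"
  assumes fin: "finite B" and M: "(\<Sum>e\<in>B. m e) = M" and Mpos: "M > 0"
    and c: "c = (\<Sum>e\<in>B. complex_of_real (m e / M) * \<psi> e)"
  shows "(\<Sum>e\<in>B. (cmod (2*c - \<psi> e))\<^sup>2 * m e) = (\<Sum>e\<in>B. (cmod (\<psi> e))\<^sup>2 * m e)"
proof -
  have s: "(\<Sum>e\<in>B. complex_of_real (m e) * \<psi> e) = complex_of_real M * c"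
    using Mpos by (simp add: c sum_distrib_left)
  have s': "(\<Sum>e\<in>B. complex_of_real (m e) * cnj (\<psi> e)) = complex_of_real M * cnj c"
    using arg_cong[OF s, of cnj] by simp
  have M': "(\<Sum>e\<in>B. complex_of_real (m e)) = complex_of_real M" by (simp flip: M)
  have "complex_of_real (\<Sum>e\<in>B. (cmod (2*c - \<psi> e))\<^sup>2 * m e)
     = (\<Sum>e\<in>B. 4*(c*cnj c)*complex_of_real (m e) - 2*c*(complex_of_real (m e) * cnj (\<psi> e)) - 2*cnj c*(complex_of_real (m e) * \<psi> e) + \<psi> e * cnj (\<psi> e) * complex_of_real (m e))"
    by (simp add: cnorm_sq algebra_simps)
  also have "\<dots> = 4*(c*cnj c)*(\<Sum>e\<in>B. complex_of_real (m e)) - 2*c*(\<Sum>e\<in>B. complex_of_real (m e) * cnj (\<psi> e))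
        - 2*cnj c*(\<Sum>e\<in>B. complex_of_real (m e) * \<psi> e) + (\<Sum>e\<in>B. \<psi> e * cnj (\<psi> e) * complex_of_real (m e))"
    by (simp add: sum.distrib sum_subtractf sum_distrib_left)
  also have "\<dots> = (\<Sum>e\<in>B. \<psi> e * cnj (\<psi> e) * complex_of_real (m e))"
    by (simp only: s s' M') (simp add: algebra_simps)
  also have "\<dots> = complex_of_real (\<Sum>e\<in>B. (cmod (\<psi> e))\<^sup>2 * m e)"
    by (simp add: cnorm_sq)
  finally show ?thesis using of_real_eq_iff by blast
qed


theorem proposition1:
  fixes V :: "'a set" and E :: "'a \<Rightarrow> 'a \<Rightarrow> bool"
    and mV :: "'a \<Rightarrow> real" and mA :: "'a \<times> 'a \<Rightarrow> real"
    and w :: "'a \<times> 'a \<Rightarrow> complex" and \<psi> :: "'a \<times> 'a \<Rightarrow> complex"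
  assumes graph: "simple_graph V E"
    and conn: "connected_graph V E"
    and lf: "locally_finite V E"
    and mV_pos: "\<forall>u\<in>V. mV u > 0"
    and mA_pos: "\<forall>e\<in>arcs E. mA e > 0"
    and setting:
      "((\<forall>u\<in>V. (\<Sum>e\<in>{e\<in>arcs E. fst e = u}. (cmod (w e))\<^sup>2) = 1)
          \<and> (\<forall>u\<in>V. mV u = 1) \<and> (\<forall>e\<in>arcs E. mA e = 1))
       \<or> ((\<forall>u\<in>V. (\<Sum>e\<in>{e\<in>arcs E. fst e = u}. w e) = 1)
          \<and> (\<forall>e\<in>arcs E. complex_of_real (mA e) = complex_of_real (mV (fst e)) * w e
                        \<and> complex_of_real (mA e) = complex_of_real (mV (snd e)) * w (rev_arc e)))"
    and psi: "in_l2 mA (arcs E) \<psi>"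
  shows "in_l2 mA (arcs E) (evolution E mV mA w \<psi>)
    \<and> l2_norm mA (arcs E) (evolution E mV mA w \<psi>) = l2_norm mA (arcs E) \<psi>"
proof -
  define B where "B u = {e\<in>arcs E. snd e = u}" for u
  have arcsE: "e \<in> arcs E \<longleftrightarrow> E (fst e) (snd e)" for e by (cases e) (simp add: arcs_def)
  have gr: "E x y \<Longrightarrow> x \<in> V \<and> y \<in> V \<and> E y x \<and> x \<noteq> y" for x y
    using graph unfolding simple_graph_def by blast
  have arcsU: "arcs E = (\<Union>u\<in>V. B u)"
    using gr by (auto simp: B_def arcsE)
  have disj: "disjoint_family_on B V" by (auto simp: disjoint_family_on_def B_def)
  have finB: "finite (B u)" if "u \<in> V" for u
  proof -
    have "B u \<subseteq> (\<lambda>v. (v,u)) ` {v. E u v}"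
      using gr by (force simp: B_def arcsE)
    moreover have "finite {v. E u v}" using lf that by (simp add: locally_finite_def)
    ultimately show ?thesis by (meson finite_imageI finite_subset)
  qed
  have rev_rev[simp]: "rev_arc (rev_arc e) = e" for e :: "'a \<times> 'a" by (simp add: rev_arc_def)
  have rev_in: "e \<in> arcs E \<Longrightarrow> rev_arc e \<in> arcs E" for e using gr by (simp add: arcsE rev_arc_def)
  have bij: "bij_betw rev_arc (arcs E) (arcs E)"
    by (rule bij_betwI[where g=rev_arc]) (auto simp: rev_in)
  have revB: "{e\<in>arcs E. fst e = u} = rev_arc ` B u" for u
  proof
    show "{e\<in>arcs E. fst e = u} \<subseteq> rev_arc ` B u"
    proof
      fix e assume "e \<in> {e\<in>arcs E. fst e = u}"
      then have "rev_arc e \<in> B u" "e = rev_arc (rev_arc e)" using rev_in by (auto simp: B_def rev_arc_def)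
      then show "e \<in> rev_arc ` B u" by blast
    qed
  qed (use gr in \<open>auto simp: B_def rev_arc_def arcs_def\<close>)
  have injrev: "inj_on rev_arc X" for X :: "('a \<times> 'a) set" by (metis inj_onI rev_rev)
  have mA_sym: "mA (rev_arc e) = mA e" if "e \<in> arcs E" for e
    using setting
  proof
    assume "(\<forall>u\<in>V. (\<Sum>e\<in>{e\<in>arcs E. fst e = u}. (cmod (w e))\<^sup>2) = 1)
          \<and> (\<forall>u\<in>V. mV u = 1) \<and> (\<forall>e\<in>arcs E. mA e = 1)"
    then show ?thesis using that rev_in by auto
  next
    assume s2: "(\<forall>u\<in>V. (\<Sum>e\<in>{e\<in>arcs E. fst e = u}. w e) = 1)
          \<and> (\<forall>e\<in>arcs E. complex_of_real (mA e) = complex_of_real (mV (fst e)) * w e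
                        \<and> complex_of_real (mA e) = complex_of_real (mV (snd e)) * w (rev_arc e))"
    have "complex_of_real (mA (rev_arc e)) = complex_of_real (mA e)"
    proof -
      have a: "complex_of_real (mA e) = complex_of_real (mV (snd e)) * w (rev_arc e)" using s2 that by blast
      have b: "complex_of_real (mA (rev_arc e)) = complex_of_real (mV (fst (rev_arc e))) * w (rev_arc e)"
        using s2 rev_in[OF that] by blast
      have "fst (rev_arc e) = snd e" by (simp add: rev_arc_def)
      then show ?thesis using a b by simp
    qed
    then show ?thesis by simp
  qed
  define \<phi> where "\<phi> e = 2 * bd_adj mV mA w (bd E w \<psi>) e - \<psi> e" for e
  define f where "f e = (cmod (\<psi> e))\<^sup>2 * mA e" for e
  define h where "h e = (cmod (\<phi> e))\<^sup>2 * mA e" for e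
  have blk: "sum f (B u) = sum h (B u)" if u: "u \<in> V" for u
  proof -
    define c where "c = bd E w \<psi> u"
    have c_def': "c = (\<Sum>e\<in>B u. cnj (w (rev_arc e)) * \<psi> e)" by (simp add: c_def bd_def B_def)
    have snd_u: "e \<in> B u \<Longrightarrow> snd e = u" for e by (simp add: B_def)
    have inA: "e \<in> B u \<Longrightarrow> e \<in> arcs E" for e by (simp add: B_def)
    show ?thesis using setting
    proof
      assume s1: "(\<forall>u\<in>V. (\<Sum>e\<in>{e\<in>arcs E. fst e = u}. (cmod (w e))\<^sup>2) = 1)
          \<and> (\<forall>u\<in>V. mV u = 1) \<and> (\<forall>e\<in>arcs E. mA e = 1)"
      have "(\<Sum>e\<in>B u. (cmod (w (rev_arc e)))\<^sup>2) = (\<Sum>e\<in>rev_arc ` B u. (cmod (w e))\<^sup>2)"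
        by (simp add: sum.reindex[OF injrev])
      also have "\<dots> = (\<Sum>e\<in>{e\<in>arcs E. fst e = u}. (cmod (w e))\<^sup>2)" by (simp only: revB)
      also have "\<dots> = 1" using s1 u by blast
      finally have n: "(\<Sum>e\<in>B u. (cmod (w (rev_arc e)))\<^sup>2) = 1" .
      have "sum h (B u) = (\<Sum>e\<in>B u. (cmod (2*c*w (rev_arc e) - \<psi> e))\<^sup>2)"
        by (rule sum.cong) (use s1 u snd_u inA in \<open>auto simp: h_def \<phi>_def bd_adj_def c_def mult.assoc\<close>)
      also have "\<dots> = (\<Sum>e\<in>B u. (cmod (\<psi> e))\<^sup>2)"
        by (rule block1[OF finB[OF u] n c_def'])
      also have "\<dots> = sum f (B u)"
        by (rule sum.cong) (use s1 inA in \<open>auto simp: f_def\<close>)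
      finally show ?thesis by simp
    next
      assume s2: "(\<forall>u\<in>V. (\<Sum>e\<in>{e\<in>arcs E. fst e = u}. w e) = 1)
          \<and> (\<forall>e\<in>arcs E. complex_of_real (mA e) = complex_of_real (mV (fst e)) * w e
                        \<and> complex_of_real (mA e) = complex_of_real (mV (snd e)) * w (rev_arc e))"
      have mVu: "mV u > 0" using mV_pos u by blast
      have wr: "w (rev_arc e) = complex_of_real (mA e / mV u)" if "e \<in> B u" for e
      proof -
        have "complex_of_real (mA e) = complex_of_real (mV u) * w (rev_arc e)"
        proof -
          have "complex_of_real (mA e) = complex_of_real (mV (snd e)) * w (rev_arc e)"
            using s2 inA[OF that] by blast
          then show ?thesis using snd_u[OF that] by simp
        qed
        then have "w (rev_arc e) = complex_of_real (mA e) / complex_of_real (mV u)"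
          using mVu by (simp add: eq_divide_eq mult.commute)
        then show ?thesis by simp
      qed
      have M: "(\<Sum>e\<in>B u. mA e) = mV u"
      proof -
        have "complex_of_real (\<Sum>e\<in>B u. mA e) = (\<Sum>e\<in>B u. complex_of_real (mV u) * w (rev_arc e))"
          unfolding of_real_sum
        proof (rule sum.cong)
          fix e assume eB: "e \<in> B u"
          have r: "mV u * (mA e / mV u) = mA e" using mVu by simp
          show "complex_of_real (mA e) = complex_of_real (mV u) * w (rev_arc e)"
            by (simp only: wr[OF eB] of_real_mult[symmetric] r)
        qed simp
        also have "\<dots> = complex_of_real (mV u) * (\<Sum>e\<in>{e\<in>arcs E. fst e = u}. w e)"
          by (simp only: revB sum.reindex[OF injrev] sum_distrib_left o_def)
        also have "\<dots> = complex_of_real (mV u)"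
        proof -
          have "(\<Sum>e\<in>{e\<in>arcs E. fst e = u}. w e) = 1" using s2 u by blast
          then show ?thesis by simp
        qed
        finally show ?thesis using of_real_eq_iff by blast
      qed
      have c2: "c = (\<Sum>e\<in>B u. complex_of_real (mA e / mV u) * \<psi> e)"
        unfolding c_def'
      proof (rule sum.cong)
        fix e assume e: "e \<in> B u"
        show "cnj (w (rev_arc e)) * \<psi> e = complex_of_real (mA e / mV u) * \<psi> e"
          by (simp only: wr[OF e] complex_cnj_complex_of_real)
      qed simp
      have "sum h (B u) = (\<Sum>e\<in>B u. (cmod (2*c - \<psi> e))\<^sup>2 * mA e)"
      proof (rule sum.cong)
        fix e assume e: "e \<in> B u"
        have mAe: "mA e > 0" using mA_pos inA[OF e] by blast
        have r: "mV u * (mA e / mV u) = mA e" using mVu by simp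
        have q: "complex_of_real (mV u) * w (rev_arc e) = complex_of_real (mA e)"
          by (simp only: wr[OF e] of_real_mult[symmetric] r)
        have "bd_adj mV mA w (bd E w \<psi>) e = c * (complex_of_real (mV u) * w (rev_arc e)) / complex_of_real (mA e)"
          by (simp only: bd_adj_def c_def snd_u[OF e] mult.assoc)
        also have "\<dots> = c" using mAe by (simp only: q) simp
        finally have "bd_adj mV mA w (bd E w \<psi>) e = c" .
        then show "h e = (cmod (2*c - \<psi> e))\<^sup>2 * mA e" by (simp add: h_def \<phi>_def)
      qed simp
      also have "\<dots> = sum f (B u)"
        unfolding f_def by (rule block2[OF finB[OF u] M mVu c2])
      finally show ?thesis by simp
    qed
  qed
  have fs: "f summable_on (\<Union>u\<in>V. B u)" using psi arcsU by (simp add: in_l2_def f_def[abs_def])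
  have res: "h summable_on (\<Union>u\<in>V. B u) \<and> infsum h (\<Union>u\<in>V. B u) = infsum f (\<Union>u\<in>V. B u)"
  proof (rule block_lemma[OF disj finB blk _ _ fs])
    fix x y assume "x \<in> V" "y \<in> B x"
    then have "mA y > 0" using mA_pos by (simp add: B_def)
    then show "f y \<ge> 0" "h y \<ge> 0" by (simp_all add: f_def h_def)
  qed
  have evo: "(cmod (evolution E mV mA w \<psi> e))\<^sup>2 * mA e = h (rev_arc e)" if "e \<in> arcs E" for e
    using mA_sym[OF that] by (simp add: evolution_def shift_def h_def \<phi>_def[abs_def])
  have hs: "h summable_on arcs E" and hi: "infsum h (arcs E) = infsum f (arcs E)"
    using res arcsU by auto
  have "(\<lambda>e. (cmod (evolution E mV mA w \<psi> e))\<^sup>2 * mA e) summable_on arcs E"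
  proof -
    have "(\<lambda>e. (cmod (evolution E mV mA w \<psi> e))\<^sup>2 * mA e) summable_on arcs E
          \<longleftrightarrow> (\<lambda>e. h (rev_arc e)) summable_on arcs E"
      by (rule summable_on_cong) (rule evo)
    also have "\<dots> \<longleftrightarrow> h summable_on arcs E" by (rule summable_on_reindex_bij_betw[OF bij])
    finally show ?thesis using hs by blast
  qed
  moreover have "infsum (\<lambda>e. (cmod (evolution E mV mA w \<psi> e))\<^sup>2 * mA e) (arcs E) = infsum f (arcs E)"
  proof -
    have "infsum (\<lambda>e. (cmod (evolution E mV mA w \<psi> e))\<^sup>2 * mA e) (arcs E)
          = infsum (\<lambda>e. h (rev_arc e)) (arcs E)"
      by (rule infsum_cong) (rule evo)
    also have "\<dots> = infsum h (arcs E)" by (rule infsum_reindex_bij_betw[OF bij])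
    finally show ?thesis using hi by simp
  qed
  ultimately show ?thesis
    by (simp add: in_l2_def l2_norm_def f_def[abs_def])
qed

end
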